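(* Let $p$ be a prime and $m$ a positive integer with $m+1\le p$. Let $B$ be a finite left brace with $(B,+)\cong(\mathbb{Z}/(p))^m$. Then for every nonzero $x\in B$ one has $o_{\cdot}(x)=o_{+}(x)=p$ (equivalently, the group $(B,\cdot)$ has exponent $p$).
   Context: A left brace is a set $B$ with two binary operations $+$ and $\cdot$ such that $(B,+)$ is an abelian group, $(B,\cdot)$ is a group, and $a\cdot(b+c)+a=a\cdot b+a\cdot c$ for all $a,b,c\in B$; the additive identity $0$ is also the multiplicative identity. $o_{\cdot}(x)$ and $o_{+}(x)$ denote the orders of $x$ in $(B,\cdot)$ and $(B,+)$ respectively. *)

theory Defs
  imports "HOL-Algebra.Algebra"
begin

definition left_brace :: "('a, 'b) monoid_scheme \<Rightarrow> ('a, 'c) monoid_scheme \<Rightarrow> bool" where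
  "left_brace A M \<longleftrightarrow>
     comm_group A \<and> group M \<and> carrier M = carrier A \<and> \<one>\<^bsub>M\<^esub> = \<one>\<^bsub>A\<^esub> \<and>
     (\<forall>a\<in>carrier A. \<forall>b\<in>carrier A. \<forall>c\<in>carrier A.
        (a \<otimes>\<^bsub>M\<^esub> (b \<otimes>\<^bsub>A\<^esub> c)) \<otimes>\<^bsub>A\<^esub> a = (a \<otimes>\<^bsub>M\<^esub> b) \<otimes>\<^bsub>A\<^esub> (a \<otimes>\<^bsub>M\<^esub> c))"

end

theory Submission
  imports Defs "HOL-Computational_Algebra.Primes"
begin

primrec gsum :: "('a, 'b) monoid_scheme \<Rightarrow> (nat \<Rightarrow> 'a) \<Rightarrow> nat \<Rightarrow> 'a" where
  "gsum G f 0 = \<one>\<^bsub>G\<^esub>"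
| "gsum G f (Suc n) = gsum G f n \<otimes>\<^bsub>G\<^esub> f n"

definition addhom :: "('a, 'b) monoid_scheme \<Rightarrow> ('a \<Rightarrow> 'a) \<Rightarrow> bool" where
  "addhom G N \<longleftrightarrow> (\<forall>x\<in>carrier G. N x \<in> carrier G) \<and>
     (\<forall>x\<in>carrier G. \<forall>y\<in>carrier G. N (x \<otimes>\<^bsub>G\<^esub> y) = N x \<otimes>\<^bsub>G\<^esub> N y)"

context comm_group
begin

lemma gsum_closed: "(\<And>i. f i \<in> carrier G) \<Longrightarrow> gsum G f n \<in> carrier G"
  by (induct n) auto

lemma gsum_mult:
  assumes "\<And>i. f i \<in> carrier G" "\<And>i. g i \<in> carrier G"
  shows "gsum G (\<lambda>i. f i \<otimes> g i) n = gsum G f n \<otimes> gsum G g n"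
  by (induct n) (auto simp: m_ac assms gsum_closed)

lemma gsum_cong: "(\<And>i. i < n \<Longrightarrow> f i = g i) \<Longrightarrow> gsum G f n = gsum G g n"
  by (induct n) auto

lemma gsum_shift:
  assumes "\<And>i. f i \<in> carrier G"
  shows "gsum G f (Suc n) = f 0 \<otimes> gsum G (\<lambda>i. f (Suc i)) n"
  by (induct n) (auto simp: m_ac assms gsum_closed)

lemma gsum_one: "(\<And>i. i < n \<Longrightarrow> f i = \<one>) \<Longrightarrow> gsum G f n = \<one>"
  by (induct n) auto

lemma gsum_pow_add:
  assumes "\<And>i. f i \<in> carrier G"
  shows "gsum G (\<lambda>i. f i [^] (a i + b i :: nat)) n
       = gsum G (\<lambda>i. f i [^] a i) n \<otimes> gsum G (\<lambda>i. f i [^] b i) n"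
proof -
  have "gsum G (\<lambda>i. f i [^] (a i + b i :: nat)) n = gsum G (\<lambda>i. f i [^] a i \<otimes> f i [^] b i) n"
    by (rule gsum_cong) (simp add: nat_pow_mult assms)
  also have "\<dots> = gsum G (\<lambda>i. f i [^] a i) n \<otimes> gsum G (\<lambda>i. f i [^] b i) n"
    by (rule gsum_mult) (auto simp: assms)
  finally show ?thesis .
qed

lemma addhomD: "addhom G N \<Longrightarrow> x \<in> carrier G \<Longrightarrow> N x \<in> carrier G"
  "addhom G N \<Longrightarrow> x \<in> carrier G \<Longrightarrow> y \<in> carrier G \<Longrightarrow> N (x \<otimes> y) = N x \<otimes> N y"
  by (auto simp: addhom_def)

lemma addhom_one: assumes "addhom G N" shows "N \<one> = \<one>"
proof -
  have "N \<one> \<otimes> N \<one> = N \<one> \<otimes> \<one>"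
    using addhomD(2)[OF assms, of \<one> \<one>] addhomD(1)[OF assms, of \<one>] by simp
  then show ?thesis using addhomD(1)[OF assms, of \<one>] by (metis l_cancel one_closed)
qed

lemma addhom_inv: assumes "addhom G N" "x \<in> carrier G" shows "N (inv x) = inv (N x)"
proof -
  have "N x \<otimes> N (inv x) = \<one>"
    using addhomD(2)[OF assms(1), of x "inv x"] assms addhom_one[OF assms(1)] by simp
  then show ?thesis using assms addhomD(1)[OF assms(1)]
    by (metis inv_closed inv_equality m_comm)
qed

lemma addhom_pow: assumes "addhom G N" "x \<in> carrier G" shows "N (x [^] (n::nat)) = N x [^] n"
  using assms by (induct n) (auto simp: addhom_one addhomD)

lemma gsum_hom:
  assumes "addhom G N" "\<And>i. f i \<in> carrier G"
  shows "N (gsum G f n) = gsum G (\<lambda>i. N (f i)) n"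
  using assms by (induct n) (auto simp: addhom_one addhomD gsum_closed)

lemma addhom_funpow: "addhom G N \<Longrightarrow> addhom G (N ^^ k)"
  by (induct k) (auto simp: addhom_def)

lemma funpow_closed: "addhom G N \<Longrightarrow> x \<in> carrier G \<Longrightarrow> (N ^^ k) x \<in> carrier G"
  using addhom_funpow addhomD(1) by blast

lemma funpow_agree:
  assumes "\<And>y. y \<in> carrier G \<Longrightarrow> f y = g y" "\<And>y. y \<in> carrier G \<Longrightarrow> f y \<in> carrier G"
    "x \<in> carrier G"
  shows "(f ^^ n) x = (g ^^ n) x \<and> (f ^^ n) x \<in> carrier G"
  using assms by (induct n) auto

lemma binom:
  assumes N: "addhom G N" and x: "x \<in> carrier G"
  shows "((\<lambda>y. y \<otimes> N y) ^^ k) x = gsum G (\<lambda>j. (N ^^ j) x [^] (k choose j)) (Suc k)"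
proof (induct k)
  case 0
  then show ?case using x by simp
next
  case (Suc k)
  define F where "F j = (N ^^ j) x" for j
  have F: "F j \<in> carrier G" for j unfolding F_def using funpow_closed[OF N x] .
  define P where "P = gsum G (\<lambda>j. F j [^] (k choose j)) (Suc k)"
  have P: "P \<in> carrier G" unfolding P_def by (rule gsum_closed) (simp add: F)
  have NP: "N P = gsum G (\<lambda>j. F (Suc j) [^] (k choose j)) (Suc k)"
  proof -
    have "N P = gsum G (\<lambda>i. N (F i [^] (k choose i))) (Suc k)"
      unfolding P_def by (rule gsum_hom[OF N]) (simp add: F)
    also have "\<dots> = gsum G (\<lambda>j. F (Suc j) [^] (k choose j)) (Suc k)"
      by (rule gsum_cong) (simp add: addhom_pow[OF N F] del: funpow.simps, simp add: F_def)
    finally show ?thesis .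
  qed
  have P2: "P = x \<otimes> gsum G (\<lambda>j. F (Suc j) [^] (k choose Suc j)) (Suc k)"
  proof -
    have "P = gsum G (\<lambda>j. F j [^] (k choose j)) (Suc (Suc k))"
      unfolding P_def using F by (simp add: binomial_eq_0 gsum_closed)
    also have "\<dots> = x \<otimes> gsum G (\<lambda>j. F (Suc j) [^] (k choose Suc j)) (Suc k)"
      by (subst gsum_shift) (simp add: F, simp add: F_def x)
    finally show ?thesis .
  qed
  have "gsum G (\<lambda>j. F j [^] (Suc k choose j)) (Suc (Suc k))
     = x \<otimes> gsum G (\<lambda>j. F (Suc j) [^] ((k choose j) + (k choose Suc j))) (Suc k)"
    by (subst gsum_shift) (simp add: F, simp add: F_def x)
  also have "\<dots> = x \<otimes> (gsum G (\<lambda>j. F (Suc j) [^] (k choose j)) (Suc k)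
       \<otimes> gsum G (\<lambda>j. F (Suc j) [^] (k choose Suc j)) (Suc k))"
    by (subst gsum_pow_add) (auto simp: F)
  also have "\<dots> = (x \<otimes> gsum G (\<lambda>j. F (Suc j) [^] (k choose Suc j)) (Suc k))
        \<otimes> gsum G (\<lambda>j. F (Suc j) [^] (k choose j)) (Suc k)"
    using F x by (simp add: m_ac gsum_closed del: gsum.simps)
  also have "\<dots> = P \<otimes> N P"
    by (simp only: P2[symmetric] NP[symmetric])
  finally have eq: "gsum G (\<lambda>j. F j [^] (Suc k choose j)) (Suc (Suc k)) = P \<otimes> N P" .
  have IH: "((\<lambda>y. y \<otimes> N y) ^^ k) x = P" unfolding P_def F_def using Suc .
  have A: "((\<lambda>y. y \<otimes> N y) ^^ Suc k) x = P \<otimes> N P" using IH by simp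
  show ?case by (simp only: A eq[unfolded F_def])
qed

lemma hockey:
  assumes N: "addhom G N" and x: "x \<in> carrier G"
  shows "gsum G (\<lambda>k. ((\<lambda>y. y \<otimes> N y) ^^ k) x) n = gsum G (\<lambda>j. (N ^^ j) x [^] (n choose Suc j)) n"
proof (induct n)
  case 0
  then show ?case by simp
next
  case (Suc n)
  define F where "F j = (N ^^ j) x" for j
  have F: "F j \<in> carrier G" for j unfolding F_def using funpow_closed[OF N x] .
  have "gsum G (\<lambda>j. F j [^] (Suc n choose Suc j)) (Suc n)
      = gsum G (\<lambda>j. F j [^] ((n choose j) + (n choose Suc j))) (Suc n)" by simp
  also have "\<dots> = gsum G (\<lambda>j. F j [^] (n choose j)) (Suc n) \<otimes> gsum G (\<lambda>j. F j [^] (n choose Suc j)) (Suc n)"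
    by (rule gsum_pow_add) (simp add: F)
  also have "gsum G (\<lambda>j. F j [^] (n choose Suc j)) (Suc n) = gsum G (\<lambda>j. F j [^] (n choose Suc j)) n"
    using F by (simp add: gsum_closed binomial_eq_0)
  finally show ?case using Suc binom[OF N x, of n] F
    by (simp add: F_def m_comm gsum_closed)
qed

lemma frob:
  assumes p: "Factorial_Ring.prime p" and ex: "\<And>y. y \<in> carrier G \<Longrightarrow> y [^] p = \<one>"
    and N: "addhom G N" and x: "x \<in> carrier G"
  shows "((\<lambda>y. y \<otimes> N y) ^^ p) x = x \<otimes> (N ^^ p) x"
proof -
  define F where "F j = (N ^^ j) x" for j
  have F: "F j \<in> carrier G" for j unfolding F_def using funpow_closed[OF N x] .
  obtain p' where p': "p = Suc p'" using p by (cases p) auto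
  have z: "F (Suc i) [^] (p choose Suc i) = \<one>" if "i < p'" for i
  proof -
    have "p dvd (p choose Suc i)" using p that p' by (intro dvd_choose_prime) auto
    then obtain t where "p choose Suc i = p * t" by blast
    then show ?thesis using F ex[OF F] by (simp add: nat_pow_pow[symmetric])
  qed
  have "((\<lambda>y. y \<otimes> N y) ^^ p) x = gsum G (\<lambda>j. F j [^] (p choose j)) (Suc p)"
    unfolding F_def by (rule binom[OF N x])
  also have "\<dots> = gsum G (\<lambda>j. F j [^] (p choose j)) p \<otimes> F p" using F by simp
  also have "gsum G (\<lambda>j. F j [^] (p choose j)) p = F 0 \<otimes> gsum G (\<lambda>i. F (Suc i) [^] (p choose Suc i)) p'"
    unfolding p' by (subst gsum_shift) (simp_all add: F)
  also have "gsum G (\<lambda>i. F (Suc i) [^] (p choose Suc i)) p' = \<one>"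
    by (rule gsum_one) (rule z)
  finally show ?thesis using F x by (simp add: F_def)
qed

lemma frob_iter:
  assumes p: "Factorial_Ring.prime p" and ex: "\<And>y. y \<in> carrier G \<Longrightarrow> y [^] p = \<one>"
    and N: "addhom G N"
  shows "x \<in> carrier G \<Longrightarrow> ((\<lambda>y. y \<otimes> N y) ^^ (p ^ k)) x = x \<otimes> (N ^^ (p ^ k)) x"
proof (induct k arbitrary: x)
  case 0
  then show ?case by simp
next
  case (Suc k)
  define N' where "N' = N ^^ (p ^ k)"
  have N': "addhom G N'" unfolding N'_def by (rule addhom_funpow[OF N])
  have "((\<lambda>y. y \<otimes> N y) ^^ (p ^ Suc k)) x = (((\<lambda>y. y \<otimes> N y) ^^ (p ^ k)) ^^ p) x"
    by (simp add: funpow_mult mult.commute)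
  also have "\<dots> = ((\<lambda>y. y \<otimes> N' y) ^^ p) x"
    using funpow_agree[of "(\<lambda>y. y \<otimes> N y) ^^ (p ^ k)" "\<lambda>y. y \<otimes> N' y" x p] Suc N'
    by (auto simp: N'_def funpow_closed[OF N])
  also have "\<dots> = x \<otimes> (N' ^^ p) x" by (rule frob[OF p ex N' Suc(2)])
  also have "(N' ^^ p) = N ^^ (p ^ Suc k)" by (simp add: N'_def funpow_mult mult.commute)
  finally show ?case .
qed

lemma nilpotent_bound:
  assumes p: "Factorial_Ring.prime p" and fin: "finite (carrier G)" and card: "card (carrier G) = p ^ m"
    and N: "addhom G N" and nil: "\<And>x. x \<in> carrier G \<Longrightarrow> (N ^^ q) x = \<one>"
  shows "x \<in> carrier G \<Longrightarrow> (N ^^ m) x = \<one>"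
proof -
  define K where "K j = {x\<in>carrier G. (N ^^ j) x = \<one>}" for j
  have sub: "subgroup (K j) G" for j
  proof (rule subgroupI)
    show "K j \<subseteq> carrier G" unfolding K_def by auto
    show "K j \<noteq> {}" unfolding K_def using addhom_one[OF addhom_funpow[OF N]] by auto
    show "inv a \<in> K j" if "a \<in> K j" for a
      using that addhom_inv[OF addhom_funpow[OF N]] unfolding K_def by auto
    show "a \<otimes> b \<in> K j" if "a \<in> K j" "b \<in> K j" for a b
      using that addhomD(2)[OF addhom_funpow[OF N]] unfolding K_def by auto
  qed
  have dvd: "card (K j) dvd p ^ m" for j
    using lagrange[OF sub[of j]] card unfolding order_def by (metis dvd_triv_right)
  have pw: "\<exists>a. card (K j) = p ^ a" for j using dvd[of j] divides_primepow_nat[OF p] by auto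
  have step: "K j \<subseteq> K (Suc j)" for j
    unfolding K_def using addhom_one[OF N] by auto
  have mono: "K a \<subseteq> K (a + i)" for a i
    by (induct i) (use step in auto)
  have stab: "K j = K (Suc j) \<Longrightarrow> K (j + i) = K j" for j i
  proof (induct i)
    case 0 then show ?case by simp
  next
    case (Suc i)
    have "K (j + Suc i) \<subseteq> K j"
    proof
      fix x assume x: "x \<in> K (j + Suc i)"
      then have xc: "x \<in> carrier G" "(N ^^ (j + i)) (N x) = \<one>" unfolding K_def
        by (auto simp: funpow_Suc_right simp del: funpow.simps)
      then have "N x \<in> K (j + i)" unfolding K_def using addhomD(1)[OF N] by auto
      then have "N x \<in> K j" using Suc by auto
      then have "x \<in> K (Suc j)" using xc unfolding K_def
        by (auto simp: funpow_Suc_right simp del: funpow.simps)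
      then show "x \<in> K j" using Suc by auto
    qed
    then show ?case using mono[of j "Suc i"] by auto
  qed
  have Kq: "K q = carrier G" unfolding K_def using nil by auto
  have p1: "1 < p" using p prime_gt_1_nat by blast
  have claim: "j \<le> m \<Longrightarrow> K j = carrier G \<or> p ^ j \<le> card (K j)" for j
  proof (induct j)
    case 0
    have "K 0 = {\<one>}" unfolding K_def by auto
    then show ?case by simp
  next
    case (Suc j)
    show ?case
    proof (cases "K j = carrier G \<or> K (Suc j) = carrier G")
      case True
      then show ?thesis using step[of j] unfolding K_def by auto
    next
      case False
      then have pj: "p ^ j \<le> card (K j)" using Suc by auto
      have ne: "K j \<noteq> K (Suc j)"
      proof
        assume "K j = K (Suc j)"
        then have "K (j + q) = K j" by (rule stab)
        moreover have "K q \<subseteq> K (q + j)" by (rule mono)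
        ultimately show False using Kq False by (auto simp: add.commute K_def)
      qed
      have fK: "finite (K (Suc j))" using fin unfolding K_def by auto
      have lt: "card (K j) < card (K (Suc j))"
        using psubset_card_mono[OF fK] step[of j] ne by auto
      obtain a where a: "card (K j) = p ^ a" using pw by blast
      obtain b where b: "card (K (Suc j)) = p ^ b" using pw by blast
      have "a < b" using lt a b p1 by (simp add: power_strict_increasing_iff)
      moreover have "j \<le> a" using pj a p1 by (simp add: power_increasing_iff)
      ultimately have "Suc j \<le> b" by simp
      then have "p ^ Suc j \<le> p ^ b" using p1 by (intro power_increasing) auto
      then show ?thesis using b by auto
    qed
  qed
  have "K m = carrier G"
  proof -
    have "K m \<subseteq> carrier G" unfolding K_def by auto
    moreover have "K m \<noteq> carrier G \<Longrightarrow> card (carrier G) \<le> card (K m)"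
      using claim[of m] card by auto
    ultimately show ?thesis using card_seteq[OF fin] by blast
  qed
  then show "x \<in> carrier G \<Longrightarrow> (N ^^ m) x = \<one>" unfolding K_def by auto
qed

end


lemma brace_mult_exp:
  assumes LB: "left_brace A M" and p: "Factorial_Ring.prime p"
    and fin: "finite (carrier A)" and card: "card (carrier A) = p ^ m" and mp: "m < p"
    and ex: "\<And>y. y \<in> carrier A \<Longrightarrow> y [^]\<^bsub>A\<^esub> p = \<one>\<^bsub>A\<^esub>"
    and a: "a \<in> carrier A"
  shows "a [^]\<^bsub>M\<^esub> p = \<one>\<^bsub>M\<^esub>"
proof -
  have cA: "comm_group A" and gM: "group M" and cM: "carrier M = carrier A"
    and oM: "\<one>\<^bsub>M\<^esub> = \<one>\<^bsub>A\<^esub>"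
    and law: "\<And>c b d. c \<in> carrier A \<Longrightarrow> b \<in> carrier A \<Longrightarrow> d \<in> carrier A \<Longrightarrow>
        (c \<otimes>\<^bsub>M\<^esub> (b \<otimes>\<^bsub>A\<^esub> d)) \<otimes>\<^bsub>A\<^esub> c = (c \<otimes>\<^bsub>M\<^esub> b) \<otimes>\<^bsub>A\<^esub> (c \<otimes>\<^bsub>M\<^esub> d)"
    using LB unfolding left_brace_def by auto
  interpret A: comm_group A by (rule cA)
  interpret M: group M by (rule gM)
  have Mc: "c \<otimes>\<^bsub>M\<^esub> b \<in> carrier A" if "c \<in> carrier A" "b \<in> carrier A" for c b
    using M.m_closed that cM by auto
  have dist: "c \<otimes>\<^bsub>M\<^esub> (b \<otimes>\<^bsub>A\<^esub> d) = (c \<otimes>\<^bsub>M\<^esub> b) \<otimes>\<^bsub>A\<^esub> (c \<otimes>\<^bsub>M\<^esub> d) \<otimes>\<^bsub>A\<^esub> inv\<^bsub>A\<^esub> c"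
    if "c \<in> carrier A" "b \<in> carrier A" "d \<in> carrier A" for c b d
  proof -
    have "c \<otimes>\<^bsub>M\<^esub> (b \<otimes>\<^bsub>A\<^esub> d) = (c \<otimes>\<^bsub>M\<^esub> (b \<otimes>\<^bsub>A\<^esub> d)) \<otimes>\<^bsub>A\<^esub> c \<otimes>\<^bsub>A\<^esub> inv\<^bsub>A\<^esub> c"
      using that Mc by (simp add: A.m_assoc)
    then show ?thesis using law[OF that] by simp
  qed
  define L where "L c b = inv\<^bsub>A\<^esub> c \<otimes>\<^bsub>A\<^esub> (c \<otimes>\<^bsub>M\<^esub> b)" for c b
  have Lc: "L c b \<in> carrier A" if "c \<in> carrier A" "b \<in> carrier A" for c b
    unfolding L_def using that Mc by simp
  have Ladd: "L c (b \<otimes>\<^bsub>A\<^esub> d) = L c b \<otimes>\<^bsub>A\<^esub> L c d"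
    if "c \<in> carrier A" "b \<in> carrier A" "d \<in> carrier A" for c b d
    unfolding L_def using that Mc by (simp add: dist A.m_ac)
  have Lone: "L \<one>\<^bsub>A\<^esub> b = b" if "b \<in> carrier A" for b
  proof -
    have "\<one>\<^bsub>A\<^esub> \<otimes>\<^bsub>M\<^esub> b = b" using M.l_one[of b] that cM oM by metis
    then show ?thesis unfolding L_def using that by simp
  qed
  have Minv: "c \<otimes>\<^bsub>M\<^esub> inv\<^bsub>A\<^esub> b = c \<otimes>\<^bsub>A\<^esub> c \<otimes>\<^bsub>A\<^esub> inv\<^bsub>A\<^esub> (c \<otimes>\<^bsub>M\<^esub> b)"
    if "c \<in> carrier A" "b \<in> carrier A" for c b
  proof -
    define xx where "xx = c \<otimes>\<^bsub>M\<^esub> inv\<^bsub>A\<^esub> b"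
    define yy where "yy = c \<otimes>\<^bsub>M\<^esub> b"
    have xx: "xx \<in> carrier A" and yy: "yy \<in> carrier A" unfolding xx_def yy_def using that Mc by auto
    have "c = c \<otimes>\<^bsub>M\<^esub> (b \<otimes>\<^bsub>A\<^esub> inv\<^bsub>A\<^esub> b)" using that cM oM[symmetric] by simp
    also have "\<dots> = yy \<otimes>\<^bsub>A\<^esub> xx \<otimes>\<^bsub>A\<^esub> inv\<^bsub>A\<^esub> c" unfolding xx_def yy_def by (rule dist) (use that in auto)
    finally have e: "c = yy \<otimes>\<^bsub>A\<^esub> xx \<otimes>\<^bsub>A\<^esub> inv\<^bsub>A\<^esub> c" .
    have "xx = inv\<^bsub>A\<^esub> yy \<otimes>\<^bsub>A\<^esub> (yy \<otimes>\<^bsub>A\<^esub> xx \<otimes>\<^bsub>A\<^esub> inv\<^bsub>A\<^esub> c) \<otimes>\<^bsub>A\<^esub> c"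
      using xx yy that by (simp add: A.m_assoc[symmetric] A.l_inv A.inv_closed, simp add: A.m_assoc)
    also have "\<dots> = c \<otimes>\<^bsub>A\<^esub> c \<otimes>\<^bsub>A\<^esub> inv\<^bsub>A\<^esub> yy"
      using e[symmetric] yy that by (simp add: A.m_ac)
    finally show ?thesis unfolding xx_def yy_def .
  qed
  have Lcomp: "L c (L b d) = L (c \<otimes>\<^bsub>M\<^esub> b) d"
    if "c \<in> carrier A" "b \<in> carrier A" "d \<in> carrier A" for c b d
  proof -
    have "L c (L b d) = inv\<^bsub>A\<^esub> c \<otimes>\<^bsub>A\<^esub> ((c \<otimes>\<^bsub>M\<^esub> inv\<^bsub>A\<^esub> b) \<otimes>\<^bsub>A\<^esub> (c \<otimes>\<^bsub>M\<^esub> (b \<otimes>\<^bsub>M\<^esub> d)) \<otimes>\<^bsub>A\<^esub> inv\<^bsub>A\<^esub> c)"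
      unfolding L_def using that Mc by (simp add: dist)
    also have "\<dots> = inv\<^bsub>A\<^esub> c \<otimes>\<^bsub>A\<^esub> ((c \<otimes>\<^bsub>A\<^esub> c \<otimes>\<^bsub>A\<^esub> inv\<^bsub>A\<^esub> (c \<otimes>\<^bsub>M\<^esub> b)) \<otimes>\<^bsub>A\<^esub> ((c \<otimes>\<^bsub>M\<^esub> b) \<otimes>\<^bsub>M\<^esub> d) \<otimes>\<^bsub>A\<^esub> inv\<^bsub>A\<^esub> c)"
      using that Minv cM by (simp add: M.m_assoc)
    also have "\<dots> = inv\<^bsub>A\<^esub> (c \<otimes>\<^bsub>M\<^esub> b) \<otimes>\<^bsub>A\<^esub> ((c \<otimes>\<^bsub>M\<^esub> b) \<otimes>\<^bsub>M\<^esub> d)"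
    proof -
      define U where "U = inv\<^bsub>A\<^esub> (c \<otimes>\<^bsub>M\<^esub> b) \<otimes>\<^bsub>A\<^esub> ((c \<otimes>\<^bsub>M\<^esub> b) \<otimes>\<^bsub>M\<^esub> d)"
      have U: "U \<in> carrier A" unfolding U_def using that Mc by simp
      have "inv\<^bsub>A\<^esub> c \<otimes>\<^bsub>A\<^esub> ((c \<otimes>\<^bsub>A\<^esub> c \<otimes>\<^bsub>A\<^esub> inv\<^bsub>A\<^esub> (c \<otimes>\<^bsub>M\<^esub> b)) \<otimes>\<^bsub>A\<^esub> ((c \<otimes>\<^bsub>M\<^esub> b) \<otimes>\<^bsub>M\<^esub> d) \<otimes>\<^bsub>A\<^esub> inv\<^bsub>A\<^esub> c)
          = (inv\<^bsub>A\<^esub> c \<otimes>\<^bsub>A\<^esub> c) \<otimes>\<^bsub>A\<^esub> (c \<otimes>\<^bsub>A\<^esub> inv\<^bsub>A\<^esub> c) \<otimes>\<^bsub>A\<^esub> U"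
        unfolding U_def using that by (simp only: A.m_ac A.m_closed A.inv_closed Mc)
      also have "\<dots> = U" using that U by (simp add: A.l_inv A.r_inv)
      finally show ?thesis unfolding U_def .
    qed
    also have "\<dots> = L (c \<otimes>\<^bsub>M\<^esub> b) d" unfolding L_def ..
    finally show ?thesis .
  qed
  have Mpow: "a [^]\<^bsub>M\<^esub> (n::nat) \<in> carrier A" for n using a cM M.nat_pow_closed by auto
  have Lpow: "L (a [^]\<^bsub>M\<^esub> n) b = (L a ^^ n) b" if "b \<in> carrier A" for n b
    using that
  proof (induct n arbitrary: b)
    case 0
    then show ?case using Lone oM by simp
  next
    case (Suc n)
    have "L (a [^]\<^bsub>M\<^esub> Suc n) b = L (a [^]\<^bsub>M\<^esub> n) (L a b)"
      using Lcomp[OF Mpow[of n] a Suc(2)] by simp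
    also have "\<dots> = (L a ^^ n) (L a b)" using Suc Lc a by simp
    finally show ?case by (simp add: funpow_Suc_right del: funpow.simps)
  qed
  define N where "N y = L a y \<otimes>\<^bsub>A\<^esub> inv\<^bsub>A\<^esub> y" for y
  have NH: "addhom A N" unfolding addhom_def N_def using Lc a Ladd
    by (auto simp: A.inv_mult A.m_ac)
  have LH: "addhom A (L a)" unfolding addhom_def using Lc a Ladd by auto
  have LN: "L a y = y \<otimes>\<^bsub>A\<^esub> N y" if "y \<in> carrier A" for y
  proof -
    have "y \<otimes>\<^bsub>A\<^esub> (L a y \<otimes>\<^bsub>A\<^esub> inv\<^bsub>A\<^esub> y) = (y \<otimes>\<^bsub>A\<^esub> inv\<^bsub>A\<^esub> y) \<otimes>\<^bsub>A\<^esub> L a y"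
      using that a by (simp only: A.m_ac A.m_closed A.inv_closed Lc)
    then show ?thesis unfolding N_def using that a Lc by simp
  qed
  have agree: "(L a ^^ k) y = ((\<lambda>y. y \<otimes>\<^bsub>A\<^esub> N y) ^^ k) y" if "y \<in> carrier A" for k y
    using A.funpow_agree[of "L a" "\<lambda>y. y \<otimes>\<^bsub>A\<^esub> N y" y k] LN that Lc a A.addhomD(1)[OF NH] by auto
  have ordM: "order M = p ^ m" using card cM unfolding order_def by simp
  have nilq: "(N ^^ (p ^ m)) y = \<one>\<^bsub>A\<^esub>" if y: "y \<in> carrier A" for y
  proof -
    have "a [^]\<^bsub>M\<^esub> (p ^ m) = \<one>\<^bsub>A\<^esub>" using M.pow_order_eq_1[of a] a cM ordM oM by simp
    then have "y = (L a ^^ (p ^ m)) y" using Lpow[OF y, of "p ^ m"] Lone[OF y] by simp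
    also have "\<dots> = y \<otimes>\<^bsub>A\<^esub> (N ^^ (p ^ m)) y"
      using agree[OF y] A.frob_iter[OF p ex NH y] by simp
    finally have "y \<otimes>\<^bsub>A\<^esub> \<one>\<^bsub>A\<^esub> = y \<otimes>\<^bsub>A\<^esub> (N ^^ (p ^ m)) y" using y by simp
    then show ?thesis using y A.funpow_closed[OF NH y] by (metis A.l_cancel A.one_closed)
  qed
  have nilm: "(N ^^ m) y = \<one>\<^bsub>A\<^esub>" if "y \<in> carrier A" for y
    using A.nilpotent_bound[OF p fin card NH nilq that] .
  have mpow: "a [^]\<^bsub>M\<^esub> n = gsum A (\<lambda>k. (L a ^^ k) a) n" for n
  proof (induct n)
    case 0
    then show ?case using oM by simp
  next
    case (Suc n)
    have fc: "(L a ^^ k) a \<in> carrier A" for k using A.funpow_closed[OF LH a] .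
    have "a [^]\<^bsub>M\<^esub> Suc n = a \<otimes>\<^bsub>M\<^esub> a [^]\<^bsub>M\<^esub> n" using M.nat_pow_Suc2 a cM by auto
    also have "\<dots> = a \<otimes>\<^bsub>A\<^esub> L a (a [^]\<^bsub>M\<^esub> n)"
      unfolding L_def using a Mpow Mc by (simp add: A.m_assoc[symmetric] A.r_inv)
    also have "\<dots> = a \<otimes>\<^bsub>A\<^esub> gsum A (\<lambda>k. L a ((L a ^^ k) a)) n"
      using Suc A.gsum_hom[OF LH fc] by simp
    also have "\<dots> = gsum A (\<lambda>k. (L a ^^ k) a) (Suc n)"
      by (subst A.gsum_shift) (simp_all add: fc)
    finally show ?case .
  qed
  have "a [^]\<^bsub>M\<^esub> p = gsum A (\<lambda>k. ((\<lambda>y. y \<otimes>\<^bsub>A\<^esub> N y) ^^ k) a) p"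
    unfolding mpow using agree[OF a] by (intro A.gsum_cong) auto
  also have "\<dots> = gsum A (\<lambda>j. (N ^^ j) a [^]\<^bsub>A\<^esub> (p choose Suc j)) p"
    by (rule A.hockey[OF NH a])
  also have "\<dots> = \<one>\<^bsub>A\<^esub>"
  proof (rule A.gsum_one)
    fix j assume j: "j < p"
    have fc: "(N ^^ j) a \<in> carrier A" using A.funpow_closed[OF NH a] .
    show "(N ^^ j) a [^]\<^bsub>A\<^esub> (p choose Suc j) = \<one>\<^bsub>A\<^esub>"
    proof (cases "j < m")
      case True
      have "p dvd (p choose Suc j)" using p True mp by (intro dvd_choose_prime) auto
      then obtain t where "p choose Suc j = p * t" by blast
      then show ?thesis using fc ex[OF fc] by (simp add: A.nat_pow_pow[symmetric])
    next
      case False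
      then have "(N ^^ j) a = (N ^^ (j - m)) ((N ^^ m) a)"
      proof -
        have "j = (j - m) + m" using False by simp
        then show ?thesis by (metis funpow_add comp_apply)
      qed
      also have "\<dots> = \<one>\<^bsub>A\<^esub>" using nilm[OF a] A.addhom_one[OF A.addhom_funpow[OF NH]] by simp
      finally show ?thesis by simp
    qed
  qed
  finally show ?thesis using oM by simp
qed


lemma pow_prod_mod:
  assumes "f \<in> carrier (product_group I (\<lambda>_. integer_mod_group p))"
  shows "f [^]\<^bsub>product_group I (\<lambda>_. integer_mod_group p)\<^esub> (n::nat) = (\<lambda>i\<in>I. (int n * f i) mod int p)"
proof (induct n)
  case 0
  then show ?case by simp
next
  case (Suc n)
  show ?case using Suc
    by (auto intro!: ext simp: mod_add_right_eq distrib_right add.commute)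
qed

theorem lemma2p6:
  fixes A :: "('a, 'b) monoid_scheme" and M :: "('a, 'c) monoid_scheme"
    and p m :: nat
  assumes "Factorial_Ring.prime p" and "0 < m" and "m + 1 \<le> p"
    and "left_brace A M"
    and "finite (carrier A)"
    and "A \<cong> product_group {..<m} (\<lambda>_. integer_mod_group p)"
  shows "\<forall>x\<in>carrier A. x \<noteq> \<one>\<^bsub>A\<^esub> \<longrightarrow> group.ord M x = p \<and> group.ord A x = p"
proof -
  note p = assms(1)
  define P where "P = product_group {..<m} (\<lambda>_. integer_mod_group p)"
  have cA: "comm_group A" and gM: "group M" and cM: "carrier M = carrier A"
    and oM: "\<one>\<^bsub>M\<^esub> = \<one>\<^bsub>A\<^esub>"
    using assms(4) unfolding left_brace_def by auto
  interpret A: comm_group A by (rule cA)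
  interpret M: group M by (rule gM)
  have gP: "group P" unfolding P_def by simp
  obtain h where h: "h \<in> iso A P" using assms(6) unfolding is_iso_def P_def by auto
  have hh: "h \<in> hom A P" and hinj: "inj_on h (carrier A)" using h by (auto simp: iso_iff)
  have p0: "0 < p" using p prime_gt_0_nat by blast
  have "card (carrier A) = card (carrier P)" using iso_same_card assms(6) unfolding P_def by blast
  also have "\<dots> = p ^ m" unfolding P_def using p0 by (simp add: card_PiE carrier_integer_mod_group)
  finally have card: "card (carrier A) = p ^ m" .
  have ex: "y [^]\<^bsub>A\<^esub> p = \<one>\<^bsub>A\<^esub>" if y: "y \<in> carrier A" for y
  proof -
    have hy: "h y \<in> carrier P" using hh y by (auto simp: hom_def)
    have "h (y [^]\<^bsub>A\<^esub> p) = h y [^]\<^bsub>P\<^esub> p" using hom_nat_pow[OF hh y A.is_group gP] .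
    also have "\<dots> = \<one>\<^bsub>P\<^esub>" using hy unfolding P_def by (simp add: pow_prod_mod)
    also have "\<dots> = h \<one>\<^bsub>A\<^esub>" using group_hom.hom_one[of A P h] hh gP
      by (simp add: group_hom_def group_hom_axioms_def A.is_group)
    finally show ?thesis using hinj y by (meson A.nat_pow_closed A.one_closed inj_onD)
  qed
  show ?thesis
  proof (intro ballI impI conjI)
    fix x assume x: "x \<in> carrier A" and x1: "x \<noteq> \<one>\<^bsub>A\<^esub>"
    have "x [^]\<^bsub>M\<^esub> p = \<one>\<^bsub>M\<^esub>"
      using brace_mult_exp[OF assms(4) p assms(5) card _ ex x] assms(3) by auto
    then have d: "M.ord x dvd p" using M.pow_eq_id x cM by auto
    have "M.ord x \<noteq> 1" using M.ord_eq_1 x cM x1 oM by auto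
    then show "M.ord x = p" using d p by (auto simp: prime_nat_iff)
    have d: "A.ord x dvd p" using A.pow_eq_id x ex by auto
    have "A.ord x \<noteq> 1" using A.ord_eq_1 x x1 by auto
    then show "A.ord x = p" using d p by (auto simp: prime_nat_iff)
  qed
qed

end
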